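(* Let $m\ge 1$, $\alpha\in(0,1)$, and let $\mathbf{X}=(X_1,\dots,X_m)$ be a real random vector whose joint CDF $F_{\mathbf{X}}$ is continuous and strictly increasing, with continuous marginal CDFs $F_{X_1},\dots,F_{X_m}$ and copula $C_{\mathbf{X}}$, so that $F_{\mathbf{X}}(x_1,\dots,x_m)=C_{\mathbf{X}}(F_{X_1}(x_1),\dots,F_{X_m}(x_m))$. Let $q_{\max}$ be the value returned by the max-rank procedure, i.e. the smallest $q\in[0,1]$ such that $\mathbb{P}\big(\max_{1\le k\le m}\tilde R_k\le q\big)\ge 1-\alpha$, where $\tilde R_k=F_{X_k}(X_k)$ is the normalized rank of the $k$-th component. Then $q_{\max}$ solves the constrained problem $$\min q \quad\text{s.t.}\quad C_{\mathbf{X}}(q,\dots,q)\ge 1-\alpha,$$ i.e. $C_{\mathbf{X}}(q_{\max},\dots,q_{\max})\ge 1-\alpha$ and no smaller $q$ satisfies this constraint. Consequently the thresholds $x_{t,k}=F_{X_k}^{-1}(q_{\max})$, $k=1,\dots,m$, satisfy $\mathbb{P}(X_1\le x_{t,1},\dots,X_m\le x_{t,m})\ge 1-\alpha$ (family-wise error control at level $\alpha$), and among all thresholds with a common marginal quantile level they are optimal in the sense of maximal statistical power (decreasing the common level by any $\epsilon>0$ violates the error control).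
   Context: Setting: $m$ hypothesis tests are run in parallel; test $k$ has an empirical null distribution $\mathbf{s}_k=(s_{1,k},\dots,s_{n,k})$ of size $n$, collected in a matrix $\mathbf{S}\in\mathbb{R}^{n\times m}$, with column-wise rank matrix $\mathbf{R}=[r_{i,k}]$, where $r_{i,k}=|\{j\in[n]: s_{j,k}\le s_{i,k}\}|$ (ranks assumed distinct). The max-rank procedure: compute $\mathbf{r}_{\max}=(\max_k r_{1,k},\dots,\max_k r_{n,k})$, sort it ascending and take $r_{\max}$ as the entry at index $\lceil (n+1)(1-\alpha)\rceil$; then for each test $k$ use as corrected threshold (quantile) the $r_{\max}$-th smallest value of $\mathbf{s}_k$. Modeling each test statistic as a component $X_k$ of the random vector $\mathbf{X}$, normalized ranks $r/n$ correspond to values of the marginal CDF $F_{X_k}$, so the normalized selected rank $r_{\max}/n$ corresponds to the $(1-\alpha)$-quantile $q_{\max}$ of $\max_k F_{X_k}(X_k)$. A vector of thresholds $\mathbf{x}_t$ controls the family-wise error rate (probability of at least one false rejection) at level $\alpha$ iff $F_{\mathbf{X}}(\mathbf{x}_t)\ge 1-\alpha$; a smaller common quantile level means larger corrected significance levels and hence higher statistical power. *)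

theory Defs
  imports "HOL-Probability.Probability"
begin

definition joint_cdf :: "'a measure \<Rightarrow> ('n \<Rightarrow> 'a \<Rightarrow> real) \<Rightarrow> ('n \<Rightarrow> real) \<Rightarrow> real" where
  "joint_cdf M X x = measure M {\<omega> \<in> space M. \<forall>k. X k \<omega> \<le> x k}"

definition marg_cdf :: "'a measure \<Rightarrow> ('n \<Rightarrow> 'a \<Rightarrow> real) \<Rightarrow> 'n \<Rightarrow> real \<Rightarrow> real" where
  "marg_cdf M X k = cdf (distr M borel (X k))"

definition quantile :: "(real \<Rightarrow> real) \<Rightarrow> real \<Rightarrow> real" where
  "quantile F q = Inf {x. q \<le> F x}"

text \<open>Copula on [0,1]^n (n = CARD('n)): grounded, uniform margins, n-increasing.\<close>
definition is_copula :: "(('n::finite \<Rightarrow> real) \<Rightarrow> real) \<Rightarrow> bool" where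
  "is_copula C \<longleftrightarrow>
     (\<forall>u. (\<forall>k. 0 \<le> u k \<and> u k \<le> 1) \<longrightarrow> 0 \<le> C u \<and> C u \<le> 1) \<and>
     (\<forall>u. (\<forall>k. 0 \<le> u k \<and> u k \<le> 1) \<and> (\<exists>k. u k = 0) \<longrightarrow> C u = 0) \<and>
     (\<forall>k t. 0 \<le> t \<and> t \<le> 1 \<longrightarrow> C (\<lambda>j. if j = k then t else 1) = t) \<and>
     (\<forall>a b. (\<forall>k. 0 \<le> a k \<and> a k \<le> b k \<and> b k \<le> 1) \<longrightarrow>
        0 \<le> (\<Sum>S\<in>(UNIV :: 'n set set). (-1) ^ card S * C (\<lambda>j. if j \<in> S then a j else b j)))"

end

theory Submission
  imports Defs
begin

theorem proposition1:
  fixes M :: "'a measure" and X :: "('n::finite) \<Rightarrow> 'a \<Rightarrow> real"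
    and C :: "('n \<Rightarrow> real) \<Rightarrow> real" and \<alpha> q_max :: real
  assumes "prob_space M"
    and X_rv: "\<And>k. X k \<in> borel_measurable M"
    and alpha: "0 < \<alpha>" "\<alpha> < 1"
    and joint_cont: "continuous_on UNIV (joint_cdf M X)"
    and joint_strict: "strict_mono (joint_cdf M X)"
    and marg_cont: "\<And>k. continuous_on UNIV (marg_cdf M X k)"
    and copula: "is_copula C"
    and sklar: "\<And>x. joint_cdf M X x = C (\<lambda>k. marg_cdf M X k (x k))"
    and qmax_range: "0 \<le> q_max" "q_max \<le> 1"
    and qmax_feasible: "measure M {\<omega> \<in> space M. Max (range (\<lambda>k. marg_cdf M X k (X k \<omega>))) \<le> q_max} \<ge> 1 - \<alpha>"
    and qmax_least: "\<And>q. 0 \<le> q \<Longrightarrow> q \<le> 1 \<Longrightarrow>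
        measure M {\<omega> \<in> space M. Max (range (\<lambda>k. marg_cdf M X k (X k \<omega>))) \<le> q} \<ge> 1 - \<alpha> \<Longrightarrow> q_max \<le> q"
  shows "C (\<lambda>_. q_max) \<ge> 1 - \<alpha>
     \<and> (\<forall>q. 0 \<le> q \<and> q \<le> 1 \<and> C (\<lambda>_. q) \<ge> 1 - \<alpha> \<longrightarrow> q_max \<le> q)
     \<and> joint_cdf M X (\<lambda>k. quantile (marg_cdf M X k) q_max) \<ge> 1 - \<alpha>
     \<and> (\<forall>\<epsilon>. 0 < \<epsilon> \<and> \<epsilon> < q_max \<longrightarrow>
          joint_cdf M X (\<lambda>k. quantile (marg_cdf M X k) (q_max - \<epsilon>)) < 1 - \<alpha>)"
proof -
  interpret P: prob_space M by fact
  note [measurable] = X_rv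
  define F where "F = marg_cdf M X"
  define G where "G = (\<lambda>q. measure M {\<omega> \<in> space M. Max (range (\<lambda>k. F k (X k \<omega>))) \<le> q})"
  have Feq: "F k t = measure M {\<omega>\<in>space M. X k \<omega> \<le> t}" for k t
  proof -
    have "F k t = measure M (X k -` {..t} \<inter> space M)"
      unfolding F_def marg_cdf_def cdf_def by (subst measure_distr) auto
    also have "X k -` {..t} \<inter> space M = {\<omega>\<in>space M. X k \<omega> \<le> t}" by auto
    finally show ?thesis .
  qed
  have RD: "real_distribution (distr M borel (X k))" for k by simp
  have FB: "finite_borel_measure (distr M borel (X k))" for k
    using real_distribution.finite_borel_measure_M[OF RD] .
  have Ftop: "(F k \<longlongrightarrow> 1) at_top" for k
    unfolding F_def marg_cdf_def using real_distribution.cdf_lim_at_top_prob[OF RD] .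
  have Fbot: "(F k \<longlongrightarrow> 0) at_bot" for k
    unfolding F_def marg_cdf_def using finite_borel_measure.cdf_lim_at_bot[OF FB] .
  have Fmono: "a \<le> b \<Longrightarrow> F k a \<le> F k b" for k a b
    unfolding F_def marg_cdf_def using finite_borel_measure.cdf_nondecreasing[OF FB] by blast
  have Fnn: "0 \<le> F k t" for k t
    unfolding F_def marg_cdf_def using finite_borel_measure.cdf_nonneg[OF FB] by blast
  have Fle1: "F k t \<le> 1" for k t
    unfolding F_def marg_cdf_def using real_distribution.cdf_bounded_prob[OF RD] by blast
  have Jmono: "x \<le> y \<Longrightarrow> joint_cdf M X x \<le> joint_cdf M X y" for x y
    using joint_strict unfolding strict_mono_def
    by (metis dual_order.order_iff_strict less_imp_le)
  have Fstrict: "F k a < F k b" if ab: "a < b" for k a b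
  proof -
    define x where "x = (\<lambda>j. if j = k then a else 0)"
    define y where "y = (\<lambda>j. if j = k then b else 0)"
    have "x < y" unfolding x_def y_def less_fun_def le_fun_def using ab
      by (auto intro!: exI[of _ k])
    hence lt: "joint_cdf M X x < joint_cdf M X y" using joint_strict unfolding strict_mono_def by blast
    have sub: "{\<omega>\<in>space M. \<forall>j. X j \<omega> \<le> y j} \<subseteq>
        {\<omega>\<in>space M. \<forall>j. X j \<omega> \<le> x j} \<union> ({\<omega>\<in>space M. X k \<omega> \<le> b} - {\<omega>\<in>space M. X k \<omega> \<le> a})"
      unfolding x_def y_def by auto
    have S1: "{\<omega>\<in>space M. \<forall>j. X j \<omega> \<le> x j} \<in> sets M" by measurable
    have S2: "{\<omega>\<in>space M. X k \<omega> \<le> b} - {\<omega>\<in>space M. X k \<omega> \<le> a} \<in> sets M" by measurable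
    have "joint_cdf M X y \<le> measure M ({\<omega>\<in>space M. \<forall>j. X j \<omega> \<le> x j} \<union> ({\<omega>\<in>space M. X k \<omega> \<le> b} - {\<omega>\<in>space M. X k \<omega> \<le> a}))"
      unfolding joint_cdf_def by (rule P.finite_measure_mono[OF sub]) (use S1 S2 in auto)
    also have "\<dots> \<le> joint_cdf M X x + measure M ({\<omega>\<in>space M. X k \<omega> \<le> b} - {\<omega>\<in>space M. X k \<omega> \<le> a})"
      unfolding joint_cdf_def by (rule measure_subadditive[OF S1 S2]) (simp_all add: P.emeasure_finite)
    also have "measure M ({\<omega>\<in>space M. X k \<omega> \<le> b} - {\<omega>\<in>space M. X k \<omega> \<le> a}) = F k b - F k a"
      unfolding Feq using ab by (subst P.finite_measure_Diff) auto
    finally show ?thesis using lt by simp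
  qed
  have Fpos: "0 < F k t" for k t using Fstrict[of "t - 1" t k] Fnn[of k "t - 1"] by simp
  have Flt1: "F k t < 1" for k t using Fstrict[of t "t + 1" k] Fle1[of k "t + 1"] by simp
  have Fiff: "F k a \<le> F k b \<longleftrightarrow> a \<le> b" for k a b
    using Fmono Fstrict by (meson linorder_not_le)
  have Fsurj: "\<exists>x. F k x = q" if q: "0 < q" "q < 1" for k q
  proof -
    have "eventually (\<lambda>t. F k t < q) at_bot" using order_tendstoD(2)[OF Fbot q(1)] .
    then obtain a where a: "\<And>t. t \<le> a \<Longrightarrow> F k t < q" unfolding eventually_at_bot_linorder by blast
    have "eventually (\<lambda>t. q < F k t) at_top" using order_tendstoD(1)[OF Ftop q(2)] .
    then obtain b where b: "\<And>t. b \<le> t \<Longrightarrow> q < F k t" unfolding eventually_at_top_linorder by blast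
    have "\<exists>x\<ge>min a b. x \<le> max a b \<and> F k x = q"
      apply (rule IVT')
      using a[of "min a b"] b[of "max a b"] continuous_on_subset[OF marg_cont[of k]]
      by (auto simp: F_def)
    thus ?thesis by blast
  qed
  define xq where "xq = (\<lambda>q k. quantile (F k) q)"
  have xq: "F k (xq q k) = q" if q: "0 < q" "q < 1" for k q
  proof -
    obtain x where x: "F k x = q" using Fsurj[OF q] by blast
    have "{t. q \<le> F k t} = {x..}" using Fiff[of k x] x by auto
    hence "xq q k = x" unfolding xq_def quantile_def by simp
    thus ?thesis using x by simp
  qed
  have Gq: "G q = joint_cdf M X (xq q) \<and> joint_cdf M X (xq q) = C (\<lambda>_. q)" if q: "0 < q" "q < 1" for q
  proof
    have "{\<omega> \<in> space M. Max (range (\<lambda>k. F k (X k \<omega>))) \<le> q} = {\<omega>\<in>space M. \<forall>k. X k \<omega> \<le> xq q k}"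
    proof -
      have "Max (range (\<lambda>k. F k (X k \<omega>))) \<le> q \<longleftrightarrow> (\<forall>k. X k \<omega> \<le> xq q k)" for \<omega>
      proof -
        have "Max (range (\<lambda>k. F k (X k \<omega>))) \<le> q \<longleftrightarrow> (\<forall>k. F k (X k \<omega>) \<le> q)"
          by (subst Max_le_iff) auto
        also have "\<dots> \<longleftrightarrow> (\<forall>k. X k \<omega> \<le> xq q k)"
          using Fiff xq[OF q] by metis
        finally show ?thesis .
      qed
      thus ?thesis by auto
    qed
    thus "G q = joint_cdf M X (xq q)" unfolding G_def joint_cdf_def by simp
    show "joint_cdf M X (xq q) = C (\<lambda>_. q)" using sklar[of "xq q"] xq[OF q] by (simp add: F_def)
  qed
  have G0: "G 0 = 0"
  proof -
    have E: "{\<omega> \<in> space M. Max (range (\<lambda>k. F k (X k \<omega>))) \<le> 0} = {}"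
    proof -
      have "\<not> Max (range (\<lambda>k. F k (X k \<omega>))) \<le> 0" for \<omega>
        by (subst Max_le_iff) (auto simp: not_le Fpos)
      thus ?thesis by auto
    qed
    show ?thesis unfolding G_def E by simp
  qed
  have qpos: "0 < q_max"
  proof (rule ccontr)
    assume "\<not> 0 < q_max"
    hence "q_max = 0" using qmax_range by simp
    thus False using qmax_feasible G0 alpha unfolding G_def F_def by simp
  qed
  have qlt1: "q_max < 1"
  proof -
    define A where "A = (\<lambda>n::nat. {\<omega>\<in>space M. \<forall>k. X k \<omega> \<le> real n})"
    have Asets: "range A \<subseteq> sets M" unfolding A_def by auto
    have Ainc: "incseq A" unfolding A_def incseq_def
      by (auto intro: order_trans)
    have Aun: "(\<Union>i. A i) = space M"
    proof
      show "(\<Union>i. A i) \<subseteq> space M" unfolding A_def by auto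
      show "space M \<subseteq> (\<Union>i. A i)"
      proof
        fix \<omega> assume w: "\<omega> \<in> space M"
        obtain n :: nat where n: "Max (range (\<lambda>k. X k \<omega>)) \<le> real n" using real_arch_simple by blast
        have "X k \<omega> \<le> real n" for k
          using n Max_ge[of "range (\<lambda>k. X k \<omega>)" "X k \<omega>"] by auto
        thus "\<omega> \<in> (\<Union>i. A i)" unfolding A_def using w by blast
      qed
    qed
    have "(\<lambda>i. measure M (A i)) \<longlonglongrightarrow> measure M (\<Union>i. A i)"
      by (rule Lim_measure_incseq[OF Asets Ainc]) simp
    hence "(\<lambda>i. measure M (A i)) \<longlonglongrightarrow> 1" using Aun P.prob_space by simp
    hence "eventually (\<lambda>i. 1 - \<alpha> < measure M (A i)) sequentially"
      using alpha by (intro order_tendstoD(1)) auto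
    then obtain n where n: "1 - \<alpha> < measure M (A n)" by (auto simp: eventually_sequentially)
    define q where "q = Max (range (\<lambda>k. F k (real n)))"
    obtain k0 where k0: "q = F k0 (real n)" unfolding q_def
    proof -
      have "Max (range (\<lambda>k. F k (real n))) \<in> range (\<lambda>k. F k (real n))" by (rule Max_in) auto
      thus ?thesis using that unfolding q_def by blast
    qed
    have q01: "0 < q" "q < 1" using k0 Fpos Flt1 by auto
    have "real n \<le> xq q k" for k
    proof -
      have "F k (real n) \<le> q" unfolding q_def by (rule Max_ge) auto
      thus ?thesis using xq[OF q01, of k] Fiff by metis
    qed
    hence "joint_cdf M X (\<lambda>_. real n) \<le> joint_cdf M X (xq q)" by (intro Jmono) (auto simp: le_fun_def)
    moreover have "joint_cdf M X (\<lambda>_. real n) = measure M (A n)" unfolding A_def joint_cdf_def by simp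
    ultimately have "1 - \<alpha> \<le> G q" using Gq[OF q01] n by simp
    hence "q_max \<le> q" using qmax_least[of q] q01 unfolding G_def F_def by simp
    thus ?thesis using q01 by simp
  qed
  have part1: "C (\<lambda>_. q_max) \<ge> 1 - \<alpha>"
    using Gq[OF qpos qlt1] qmax_feasible unfolding G_def F_def by simp
  have part2: "\<forall>q. 0 \<le> q \<and> q \<le> 1 \<and> C (\<lambda>_. q) \<ge> 1 - \<alpha> \<longrightarrow> q_max \<le> q"
  proof (intro allI impI)
    fix q assume h: "0 \<le> q \<and> q \<le> 1 \<and> C (\<lambda>_. q) \<ge> 1 - \<alpha>"
    show "q_max \<le> q"
    proof (cases "q = 0")
      case True
      have "C (\<lambda>_. q) = 0" using copula True unfolding is_copula_def by auto
      thus ?thesis using h alpha by simp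
    next
      case False
      show ?thesis
      proof (cases "q = 1")
        case True thus ?thesis using qmax_range by simp
      next
        case False2: False
        have q01: "0 < q" "q < 1" using h False False2 by auto
        show ?thesis using Gq[OF q01] h qmax_least[of q] unfolding G_def F_def by simp
      qed
    qed
  qed
  have part3: "joint_cdf M X (\<lambda>k. quantile (marg_cdf M X k) q_max) \<ge> 1 - \<alpha>"
    using Gq[OF qpos qlt1] part1 unfolding xq_def F_def by simp
  have part4: "\<forall>\<epsilon>. 0 < \<epsilon> \<and> \<epsilon> < q_max \<longrightarrow>
          joint_cdf M X (\<lambda>k. quantile (marg_cdf M X k) (q_max - \<epsilon>)) < 1 - \<alpha>"
  proof (intro allI impI)
    fix \<epsilon> :: real assume e: "0 < \<epsilon> \<and> \<epsilon> < q_max"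
    have q01: "0 < q_max - \<epsilon>" "q_max - \<epsilon> < 1" using e qlt1 by auto
    have eq: "joint_cdf M X (\<lambda>k. quantile (marg_cdf M X k) (q_max - \<epsilon>)) = C (\<lambda>_. q_max - \<epsilon>)"
      using Gq[OF q01] unfolding xq_def F_def by simp
    show "joint_cdf M X (\<lambda>k. quantile (marg_cdf M X k) (q_max - \<epsilon>)) < 1 - \<alpha>"
    proof (rule ccontr)
      assume "\<not> ?thesis"
      hence "C (\<lambda>_. q_max - \<epsilon>) \<ge> 1 - \<alpha>" using eq by simp
      hence "q_max \<le> q_max - \<epsilon>" using part2 q01 by auto
      thus False using e by simp
    qed
  qed
  show ?thesis using part1 part2 part3 part4 by blast
qed

end
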